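(* Let $q$ be odd, let $n\ge3$ and $1\le b\le n-2$, and let $C_1,C_2$ be $[n,n-1]_q$-linear codes that are both $b$-symbol MDS codes. Suppose there exist $\mathbf{x}=(x_1,\dots,x_n)\in C_1\cap C_2$ and a hole $H\in\mathbb{H}(\chi_1(\mathbf{x}))$ such that $w_b(\mathbf{x})=d_b(C_1)$, $|H|\ge b-1$, and $\{1,n\}\cap H\ne\emptyset$. Then the $[2n,2n-2]_q$-linear code $C=\{[\mathbf{u}+\mathbf{v},\mathbf{u}-\mathbf{v}]:\mathbf{u}\in C_1,\mathbf{v}\in C_2\}$ is a $b$-symbol AMDS code, i.e., $d_b(C)=b+1$.
   Context: For $\mathbf{x}\in\mathbb{F}_q^L$ and $1\le b\le L$, $\chi_b(\mathbf{x})=\{i:(x_i,\dots,x_{i+b-1})\ne\mathbf{0}\}$ (indices mod $L$), $w_b(\mathbf{x})=|\chi_b(\mathbf{x})|$, $d_b(C)=\min_{\mathbf{0}\ne\mathbf{c}\in C}w_b(\mathbf{c})$; $\chi_1$ is the Hamming support. For $J\subseteq\{1,\dots,n\}$, a hole of $J$ of size $h\ge1$ is a set $\{a+1,\dots,a+h\}$ disjoint from $J$ (indices mod $n$) with $a,a+h+1\in J$; $\mathbb{H}(J)$ is the set of holes of $J$. An $[n,k]_q$-linear code $C$ is $b$-symbol MDS if $d_b(C)=\min\{n-k+b,n\}$ and $b$-symbol AMDS if $d_b(C)=\min\{n-k+b,n\}-1$. *)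

theory Defs
  imports Complex_Main "HOL-Library.Function_Algebras"
begin

text \<open>Vectors of length L over a field are functions nat => 'a that vanish
  outside {0..<L}. Positions are 0-based: the paper's position i corresponds
  to index i-1 here.\<close>

definition fscale :: "'a::field \<Rightarrow> (nat \<Rightarrow> 'a) \<Rightarrow> (nat \<Rightarrow> 'a)" where
  "fscale c x = (\<lambda>i. c * x i)"

lemma vector_space_fscale: "vector_space (fscale :: 'a::field \<Rightarrow> _)"
  by unfold_locales (auto simp: fscale_def fun_eq_iff algebra_simps)

definition linear_code :: "nat \<Rightarrow> nat \<Rightarrow> (nat \<Rightarrow> 'a::field) set \<Rightarrow> bool" where
  "linear_code L k C \<longleftrightarrow>
     module.subspace fscale C \<and> (\<forall>x\<in>C. \<forall>i\<ge>L. x i = 0) \<and>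
     vector_space.dim fscale C = k"

definition chi :: "nat \<Rightarrow> nat \<Rightarrow> (nat \<Rightarrow> 'a::zero) \<Rightarrow> nat set" where
  "chi L b x = {i. i < L \<and> (\<exists>j<b. x ((i + j) mod L) \<noteq> 0)}"

definition wb :: "nat \<Rightarrow> nat \<Rightarrow> (nat \<Rightarrow> 'a::zero) \<Rightarrow> nat" where
  "wb L b x = card (chi L b x)"

definition db :: "nat \<Rightarrow> nat \<Rightarrow> (nat \<Rightarrow> 'a::zero) set \<Rightarrow> nat" where
  "db L b C = Inf {wb L b c | c. c \<in> C \<and> c \<noteq> 0}"

definition holes :: "nat \<Rightarrow> nat set \<Rightarrow> nat set set" where
  "holes n J = {H. \<exists>a h. a < n \<and> h \<ge> 1 \<and>
      H = {(a + t) mod n | t. 1 \<le> t \<and> t \<le> h} \<and> H \<inter> J = {} \<and>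
      a \<in> J \<and> (a + h + 1) mod n \<in> J}"

definition b_MDS :: "nat \<Rightarrow> nat \<Rightarrow> nat \<Rightarrow> (nat \<Rightarrow> 'a::field) set \<Rightarrow> bool" where
  "b_MDS L k b C \<longleftrightarrow> db L b C = min (L - k + b) L"

definition b_AMDS :: "nat \<Rightarrow> nat \<Rightarrow> nat \<Rightarrow> (nat \<Rightarrow> 'a::field) set \<Rightarrow> bool" where
  "b_AMDS L k b C \<longleftrightarrow> db L b C = min (L - k + b) L - 1"

definition uv_concat :: "nat \<Rightarrow> (nat \<Rightarrow> 'a::ab_group_add) \<Rightarrow> (nat \<Rightarrow> 'a) \<Rightarrow> nat \<Rightarrow> 'a" where
  "uv_concat n u v = (\<lambda>i. if i < n then u i + v i
                          else if i < 2 * n then u (i - n) - v (i - n) else 0)"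

end

theory Submission
  imports Defs
begin


lemma mod2: "(x::nat) < 2*L \<Longrightarrow> x mod L = (if x < L then x else x - L)"
proof (cases "x < L")
  case False
  assume "x < 2*L"
  then have "x - L < L" using False by simp
  moreover have "x mod L = (x - L) mod L" using False by (simp add: le_mod_geq)
  ultimately show ?thesis using False by simp
qed simp

lemma mod2d: "(x::nat) < 2*L \<Longrightarrow> (x < L \<and> x mod L = x) \<or> (L \<le> x \<and> x mod L = x - L)"
  using mod2[of x L] by (auto split: if_splits)

lemma invol_even:
  assumes "finite S" "\<And>x. x \<in> S \<Longrightarrow> s x \<in> S" "\<And>x. s (s x) = x" "\<And>x. s x \<noteq> x"
  shows "even (card S)"
  using assms
proof (induction "card S" arbitrary: S rule: less_induct)
  case less
  show ?case
  proof (cases "S = {}")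
    case True then show ?thesis by simp
  next
    case False
    then obtain z where z: "z \<in> S" by auto
    have sz: "s z \<in> S" using less z by auto
    have d: "s z \<noteq> z" using less by auto
    have c2: "card {z, s z} = 2" using d by auto
    have sub: "{z, s z} \<subseteq> S" using z sz by auto
    have c: "card (S - {z, s z}) = card S - 2"
      using card_Diff_subset[OF _ sub] less.prems(1) c2 by simp
    have ge: "card S \<ge> 2" using card_mono[OF less.prems(1) sub] c2 by simp
    have "even (card (S - {z, s z}))"
    proof (rule less.hyps)
      show "card (S - {z, s z}) < card S" using c ge by simp
      show "finite (S - {z, s z})" using less.prems(1) by simp
      show "s x \<in> S - {z, s z}" if "x \<in> S - {z, s z}" for x
        using that less.prems(2,3) by (metis Diff_iff insertCI insertE singletonD)
    qed (use less.prems in auto)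
    then show ?thesis using c ge by presburger
  qed
qed

lemma two_ne_zero_field:
  assumes "odd (card (UNIV :: 'a::{field,finite} set))" shows "(2::'a) \<noteq> 0"
proof
  assume h: "(2::'a) = 0"
  have "even (card (UNIV::'a set))"
  proof (rule invol_even[where s="\<lambda>x. x + 1"])
    fix x :: 'a
    have "x + 1 + 1 = x + 2" by (simp add: add.assoc)
    then show "x + 1 + 1 = x" using h by simp
  qed auto
  then show False using assms by simp
qed

context vector_space begin
lemma independent_Un_span_disj:
  assumes "independent S" "independent T" "finite T" "span S \<inter> span T = {0}"
  shows "independent (S \<union> T)"
  using assms(3,2,4)
proof (induction T rule: finite_induct)
  case empty then show ?case using assms(1) by simp
next
  case (insert a T)
  have iT: "independent T" using insert.prems(1) by (meson dependent_mono subset_insertI)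
  have aT: "a \<notin> span T" using insert.prems(1) insert.hyps(2) by (simp add: independent_insert)
  have "span T \<subseteq> span (insert a T)" by (rule span_mono) auto
  then have sd: "span S \<inter> span T = {0}" using insert.prems(2) span_zero by blast
  have IH: "independent (S \<union> T)" using insert.IH iT sd by simp
  have a_sp: "a \<in> span (insert a T)" by (simp add: span_base)
  have "a \<notin> span (S \<union> T)"
  proof
    assume "a \<in> span (S \<union> T)"
    then obtain x y where xy: "a = x + y" "x \<in> span S" "y \<in> span T" by (auto simp: span_Un)
    have "x = a - y" using xy by simp
    moreover have "y \<in> span (insert a T)" using xy(3) \<open>span T \<subseteq> _\<close> by auto
    ultimately have "x \<in> span (insert a T)" using a_sp span_diff by simp
    then have "x = 0" using xy(2) insert.prems(2) by blast
    then show False using xy aT by simp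
  qed
  moreover have "a \<notin> S"
  proof
    assume "a \<in> S"
    then have "a \<in> span S" by (simp add: span_base)
    then have "a = 0" using a_sp insert.prems(2) by blast
    then show False using insert.prems(1) dependent_zero by auto
  qed
  ultimately show ?case using IH insert.hyps(2) by (simp add: independent_insert)
qed
end



lemma chi_finite: "finite (chi L b c)"
  by (rule finite_subset[of _ "{..<L}"]) (auto simp: chi_def)

lemma single_support_card:
  fixes c :: "nat \<Rightarrow> 'a::zero"
  assumes "k < L" "\<And>i. i < L \<Longrightarrow> i \<noteq> k \<Longrightarrow> c i = 0" "b \<le> L"
  shows "card (chi L b c) \<le> b"
proof -
  have "chi L b c \<subseteq> (\<lambda>j. (k + L - j) mod L) ` {..<b}"
  proof
    fix i assume "i \<in> chi L b c"
    then obtain j where ij: "i < L" "j < b" "c ((i + j) mod L) \<noteq> 0" by (auto simp: chi_def)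
    have L0: "0 < L" using assms by simp
    have "(i + j) mod L = k" using ij assms(2)[of "(i+j) mod L"] L0 by fastforce
    moreover have b1: "i+j < 2*L" and b2: "k+L-j < 2*L" using ij assms(1,3) by linarith+
    ultimately have "i = (k + L - j) mod L"
      using mod2d[OF b1] mod2d[OF b2] ij assms(1,3) by (elim disjE conjE; arith) 
    then show "i \<in> (\<lambda>j. (k + L - j) mod L) ` {..<b}" using ij by auto
  qed
  then have "card (chi L b c) \<le> card ((\<lambda>j. (k + L - j) mod L) ` {..<b})"
    by (rule card_mono[rotated]) simp
  also have "\<dots> \<le> b" using card_image_le[of "{..<b}"] by simp
  finally show ?thesis .
qed

lemma ar5: "k<b \<Longrightarrow> j0<b \<Longrightarrow> 0<j0 \<Longrightarrow> 2*b \<le> L \<Longrightarrow> 1 \<le> b \<Longrightarrow> p<L \<Longrightarrow> (p'::nat)<L \<Longrightarrow> (j0 \<le> p \<and> p' = p - j0) \<or> (p < j0 \<and> p' = p+L-j0) \<Longrightarrow> (k \<le> p \<and> e = p - k) \<or> (p<k \<and> e = p+L-k) \<Longrightarrow> (p'+L-(b-1) < L \<and> e = p'+L-(b-1)) \<or> (L \<le> p'+L-(b-1) \<and> e = p'+L-(b-1)-L) \<Longrightarrow> False"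
  by (elim disjE conjE; linarith)

lemma ar4: "(p'::nat)<L \<Longrightarrow> 1 \<le> b \<Longrightarrow> b \<le> L \<Longrightarrow> (p'+L-(b-1) < L \<and> e = p'+L-(b-1)) \<or> (L \<le> p'+L-(b-1) \<and> e = p'+L-(b-1)-L) \<Longrightarrow> e + (b-1) = p' + L \<or> e + (b-1) = p'"
  by (elim disjE conjE; linarith)

lemma two_support_card:
  fixes c :: "nat \<Rightarrow> 'a::zero"
  assumes "p < L" "p' < L" "p \<noteq> p'" "c p \<noteq> 0" "c p' \<noteq> 0" "1 \<le> b" "2 * b \<le> L"
  shows "b + 1 \<le> card (chi L b c)"
proof -
  define g where "g j = (p + L - j) mod L" for j
  define W where "W = g ` {..<b}"
  have gv: "g j = (if j \<le> p then p - j else p + L - j)" if "j \<le> L" for j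
    using mod2[of "p+L-j" L] that assms(1) by (auto simp: g_def)
  have gvd: "(j \<le> p \<and> g j = p - j) \<or> (p < j \<and> g j = p + L - j)" if "j < b" for j
    using gv[of j] that assms by auto
  have inj: "inj_on g {..<b}"
  proof
    fix j1 j2 assume "j1 \<in> {..<b}" "j2 \<in> {..<b}" "g j1 = g j2"
    then show "j1 = j2" using gv[of j1] gv[of j2] assms
      by (simp split: if_splits) 
  qed
  have cW: "card W = b" using card_image[OF inj] by (simp add: W_def)
  have win: "i \<in> chi L b c" if "i < L" "j < b" "(i + j) mod L = q" "c q \<noteq> 0" for i j q
    using that by (auto simp: chi_def)
  have gmod: "(g j + j) mod L = p" if "j < b" for j
    using gv[of j] mod2[of "g j + j" L] that assms
    by (simp split: if_splits) 
  have gL: "g j < L" for j using assms by (simp add: g_def)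
  have WS: "W \<subseteq> chi L b c"
    using win[OF gL _ gmod] assms(4) by (auto simp: W_def)
  obtain e where e: "e \<in> chi L b c" "e \<notin> W"
  proof (cases "p' \<in> W")
    case False
    have "p' \<in> chi L b c" using win[of p' 0 p'] assms by simp
    then show ?thesis using that False by blast
  next
    case True
    then obtain j0 where j0: "j0 < b" "p' = g j0" by (auto simp: W_def)
    define e where "e = (p' + L - (b - 1)) mod L"
    have eL: "e < L" using assms by (simp add: e_def)
    have b1: "p' + L - (b-1) < 2*L" and b2: "e + (b-1) < 2*L" using assms eL by linarith+
    have h3: "(p'+L-(b-1) < L \<and> e = p'+L-(b-1)) \<or> (L \<le> p'+L-(b-1) \<and> e = p'+L-(b-1)-L)"
      using mod2d[OF b1] unfolding e_def[symmetric] by simp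
    have "(e + (b - 1)) mod L = p'"
      using ar4[OF assms(2,6) _ h3] assms by auto
    then have "e \<in> chi L b c" using win[OF eL _ _ assms(5), of "b-1"] assms by simp
    moreover have "e \<notin> W"
    proof
      assume "e \<in> W"
      then obtain k where k: "k < b" "e = g k" by (auto simp: W_def)
      show False
      proof (rule ar5[OF k(1) j0(1) _ _ assms(6) assms(1,2) _ _ h3])
        show "0 < j0" using j0 gvd[of 0] assms(3,6) by (cases "j0 = 0") auto
        show "(j0 \<le> p \<and> p' = p - j0) \<or> (p < j0 \<and> p' = p+L-j0)" using gvd[of j0] j0 by simp
        show "(k \<le> p \<and> e = p - k) \<or> (p<k \<and> e = p+L-k)" using gvd[of k] k by simp
      qed (use assms in simp)
    qed
    ultimately show ?thesis using that by blast
  qed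
  have "card (insert e W) \<le> card (chi L b c)"
    using WS e by (intro card_mono chi_finite) auto
  moreover have "card (insert e W) = b + 1"
    using e cW by (simp add: W_def)
  ultimately show ?thesis by simp
qed



lemma chi1: "0 < n \<Longrightarrow> chi n 1 x = {i. i < n \<and> x i \<noteq> 0}"
  by (auto simp: chi_def)

lemma hole_gap:
  fixes x :: "nat \<Rightarrow> 'a::zero"
  assumes hH: "H \<in> holes n (chi n 1 x)" and cH: "card H \<ge> b - 1" and H0: "{0, n-1} \<inter> H \<noteq> {}"
    and n3: "n \<ge> 3" and b1: "1 \<le> b"
    and pp: "p' < p" "p < n" "x p \<noteq> 0" "x p' \<noteq> 0" "n + p' + 1 \<le> p + b"
  shows False
proof -
  have n0: "0 < n" using n3 by simp
  obtain a h where ah: "a < n" "h \<ge> 1" "H = {(a + t) mod n | t. 1 \<le> t \<and> t \<le> h}"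
    "H \<inter> chi n 1 x = {}"
    using hH by (auto simp: holes_def)
  have z: "x ((a + t) mod n) = 0" if "1 \<le> t" "t \<le> h" for t
  proof -
    have "(a + t) mod n \<in> H" using that ah(3) by auto
    then show ?thesis using ah(4) n0 unfolding chi1[OF n0] by auto
  qed
  have Himg: "H = (\<lambda>t. (a + t) mod n) ` {1..h}" using ah(3) by auto
  have hb: "b - 1 \<le> h" using cH card_image_le[of "{1..h}" "\<lambda>t. (a + t) mod n"] Himg by simp
  obtain t0 where t0: "1 \<le> t0" "t0 \<le> h" "(a + t0) mod n = 0 \<or> (a + t0) mod n = n - 1"
    using H0 ah(3) by auto
  show False
  proof (cases "a < p'")
    case True
    show False
    proof (cases "p' - a \<le> h")
      case True
      then have "x ((a + (p' - a)) mod n) = 0" using z[of "p' - a"] \<open>a < p'\<close> by simp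
      then show False using \<open>a < p'\<close> pp by simp
    next
      case False
      then have "(a + t0) mod n = a + t0" using t0 \<open>a < p'\<close> pp by simp
      then show False using t0 False \<open>a < p'\<close> pp by auto
    qed
  next
    case c2: False
    show False
    proof (cases "a < p")
      case True
      show False
      proof (cases "p - a \<le> h")
        case True
        then have "x ((a + (p - a)) mod n) = 0" using z[of "p - a"] \<open>a < p\<close> by simp
        then show False using \<open>a < p\<close> pp by simp
      next
        case False
        then have "(a + t0) mod n = a + t0" using t0 \<open>a < p\<close> pp by simp
        then show False using t0 False \<open>a < p\<close> pp c2 by auto
      qed
    next
      case False
      show False
      proof (cases "n + p' - a \<le> h")
        case True
        have "(a + (n + p' - a)) mod n = p'" using ah(1) pp by simp
        moreover have "1 \<le> n + p' - a" using ah(1) by linarith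
        ultimately show False using z[of "n + p' - a"] True pp by simp
      next
        case c3: False
        then show False using hb False pp b1 by linarith
      qed
    qed
  qed
qed

lemma uv_val:
  fixes x :: "nat \<Rightarrow> 'a::field"
  assumes "k < 2 * n" "uv_concat n x x k \<noteq> 0"
  shows "k < n \<and> x k \<noteq> 0"
  using assms by (auto simp: uv_concat_def split: if_splits)

lemma window_info:
  fixes x :: "nat \<Rightarrow> 'a::field"
  assumes "i \<in> chi (2*n) b (uv_concat n x x)" "b \<le> n"
  shows "i < 2*n \<and> (\<exists>j k. j < b \<and> k < n \<and> x k \<noteq> 0 \<and> (i + j = k \<or> i + j = k + 2*n))"
proof -
  obtain j where j: "i < 2*n" "j < b" "uv_concat n x x ((i + j) mod (2*n)) \<noteq> 0"
    using assms(1) by (auto simp: chi_def)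
  have n0: "0 < n" using j by simp
  define k where "k = (i + j) mod (2*n)"
  have kk: "k < n \<and> x k \<noteq> 0" using uv_val[of k n x] j n0 by (simp add: k_def)
  have bd: "i + j < 2 * (2*n)" using j assms by linarith
  have "i + j = k \<or> i + j = k + 2*n" using mod2d[OF bd] unfolding k_def[symmetric] by auto
  then show ?thesis using j kk by blast
qed

lemma no_both:
  fixes x :: "nat \<Rightarrow> 'a::field"
  assumes hH: "H \<in> holes n (chi n 1 x)" and cH: "card H \<ge> b - 1" and H0: "{0, n-1} \<inter> H \<noteq> {}"
    and n3: "n \<ge> 3" and b1: "1 \<le> b" and bn: "b \<le> n - 2"
    and i: "i < n" "i \<in> chi (2*n) b (uv_concat n x x)" "i + n \<in> chi (2*n) b (uv_concat n x x)"
  shows False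
proof -
  obtain j1 k1 where w1: "j1 < b" "k1 < n" "x k1 \<noteq> 0" "i + j1 = k1 \<or> i + j1 = k1 + 2*n"
    using window_info[OF i(2)] bn by (metis diff_le_self le_trans)
  obtain j2 k2 where w2: "j2 < b" "k2 < n" "x k2 \<noteq> 0" "i + n + j2 = k2 \<or> i + n + j2 = k2 + 2*n"
    using window_info[OF i(3)] bn by (metis diff_le_self le_trans)
  have e1: "i + j1 = k1" using w1 i(1) bn by linarith
  have e2: "i + n + j2 = k2 + 2*n" using w2 by linarith
  show False
  proof (rule hole_gap[OF hH cH H0 n3 b1, of k2 k1])
    show "k2 < k1" using e1 e2 w2(1) bn n3 by linarith
    show "n + k2 + 1 \<le> k1 + b" using e1 e2 w2(1) by linarith
  qed (use w1 w2 in auto)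
qed

lemma upper:
  fixes x :: "nat \<Rightarrow> 'a::field"
  assumes hH: "H \<in> holes n (chi n 1 x)" and cH: "card H \<ge> b - 1" and H0: "{0, n-1} \<inter> H \<noteq> {}"
    and n3: "n \<ge> 3" and b1: "1 \<le> b" and bn: "b \<le> n - 2"
  shows "card (chi (2*n) b (uv_concat n x x)) \<le> card (chi n b x)"
proof (rule card_inj_on_le[where f="\<lambda>i. i mod n"])
  show "finite (chi n b x)" by (rule chi_finite)
  show "(\<lambda>i. i mod n) ` chi (2*n) b (uv_concat n x x) \<subseteq> chi n b x"
  proof clarify
    fix i assume iC: "i \<in> chi (2*n) b (uv_concat n x x)"
    obtain j k where w: "i < 2*n" "j < b" "k < n" "x k \<noteq> 0" "i + j = k \<or> i + j = k + 2*n"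
      using window_info[OF iC] bn by (metis diff_le_self le_trans)
    have bd: "i < 2*n" using w by simp
    have "i mod n < n" using n3 by simp
    then have bd2: "i mod n + j < 2 * n" using w bn by linarith
    have "(i mod n + j) mod n = k"
      using mod2d[OF bd] mod2d[OF bd2] w bn by (elim disjE conjE; linarith)
    then show "i mod n \<in> chi n b x" using w n3 by (auto simp: chi_def)
  qed
  show "inj_on (\<lambda>i. i mod n) (chi (2*n) b (uv_concat n x x))"
  proof
    fix i1 i2 assume i1: "i1 \<in> chi (2*n) b (uv_concat n x x)" and i2: "i2 \<in> chi (2*n) b (uv_concat n x x)"
      and eq: "i1 mod n = i2 mod n"
    have bd1: "i1 < 2*n" and bd2: "i2 < 2*n" using window_info[OF i1] window_info[OF i2] bn by auto
    have "i1 = i2 \<or> (i1 < n \<and> i2 = i1 + n) \<or> (i2 < n \<and> i1 = i2 + n)"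
      using mod2d[OF bd1] mod2d[OF bd2] eq by (elim disjE conjE; linarith)
    then show "i1 = i2"
      using no_both[OF hH cH H0 n3 b1 bn, of i1] no_both[OF hH cH H0 n3 b1 bn, of i2] i1 i2 by auto
  qed
qed



lemma dim_part:
  fixes C1 C2 :: "(nat \<Rightarrow> 'a::field) set"
  assumes two: "(2::'a) \<noteq> 0" and n3: "n \<ge> 3"
    and L1: "linear_code n (n-1) C1" and L2: "linear_code n (n-1) C2"
  shows "linear_code (2*n) (2*n-2) {uv_concat n u v | u v. u \<in> C1 \<and> v \<in> C2}"
proof -
  interpret V: vector_space "fscale :: 'a \<Rightarrow> (nat \<Rightarrow> 'a) \<Rightarrow> (nat \<Rightarrow> 'a)" by (rule vector_space_fscale)
  have s1: "V.subspace C1" and z1: "\<forall>x\<in>C1. \<forall>i\<ge>n. x i = 0" and d1: "V.dim C1 = n - 1"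
    using L1 by (auto simp: linear_code_def)
  have s2: "V.subspace C2" and z2: "\<forall>x\<in>C2. \<forall>i\<ge>n. x i = 0" and d2: "V.dim C2 = n - 1"
    using L2 by (auto simp: linear_code_def)
  define f where "f u = uv_concat n u 0" for u :: "nat \<Rightarrow> 'a"
  define g where "g v = uv_concat n 0 v" for v :: "nat \<Rightarrow> 'a"
  have lf: "Vector_Spaces.linear fscale fscale f"
    by (auto simp: Vector_Spaces.linear_iff vector_space_fscale f_def uv_concat_def fscale_def fun_eq_iff algebra_simps)
  have lg: "Vector_Spaces.linear fscale fscale g"
    by (auto simp: Vector_Spaces.linear_iff vector_space_fscale g_def uv_concat_def fscale_def fun_eq_iff algebra_simps)
  interpret F: Vector_Spaces.linear fscale fscale f by (rule lf)
  interpret G: Vector_Spaces.linear fscale fscale g by (rule lg)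
  obtain B1 where B1: "B1 \<subseteq> C1" "V.independent B1" "C1 \<subseteq> V.span B1" "card B1 = V.dim C1"
    using V.basis_exists by blast
  obtain B2 where B2: "B2 \<subseteq> C2" "V.independent B2" "C2 \<subseteq> V.span B2" "card B2 = V.dim C2"
    using V.basis_exists by blast
  have sp1: "V.span B1 = C1" using V.span_subspace[OF B1(1) B1(3) s1] .
  have sp2: "V.span B2 = C2" using V.span_subspace[OF B2(1) B2(3) s2] .
  have fin1: "finite B1" using B1(4) d1 n3 card.infinite by fastforce
  have fin2: "finite B2" using B2(4) d2 n3 card.infinite by fastforce
  have injf: "inj_on f C1"
  proof
    fix u u' assume uu: "u \<in> C1" "u' \<in> C1" and eq: "f u = f u'"
    show "u = u'"
    proof (rule ext)
      fix i show "u i = u' i"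
      proof (cases "i < n")
        case True then show ?thesis using fun_cong[OF eq, of i] by (simp add: f_def uv_concat_def)
      next
        case False then show ?thesis using z1 uu by (metis leI)
      qed
    qed
  qed
  have injg: "inj_on g C2"
  proof
    fix u u' assume uu: "u \<in> C2" "u' \<in> C2" and eq: "g u = g u'"
    show "u = u'"
    proof (rule ext)
      fix i show "u i = u' i"
      proof (cases "i < n")
        case True then show ?thesis using fun_cong[OF eq, of i] by (simp add: g_def uv_concat_def)
      next
        case False then show ?thesis using z2 uu by (metis leI)
      qed
    qed
  qed
  have I1: "V.independent (f ` B1)"
    using F.independent_injective_image[OF B1(2)] injf sp1 by simp
  have I2: "V.independent (g ` B2)"
    using G.independent_injective_image[OF B2(2)] injg sp2 by simp
  have c1: "card (f ` B1) = n - 1" using card_image[OF inj_on_subset[OF injf B1(1)]] B1(4) d1 by simp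
  have c2: "card (g ` B2) = n - 1" using card_image[OF inj_on_subset[OF injg B2(1)]] B2(4) d2 by simp
  have spf: "V.span (f ` B1) = f ` C1" using F.span_image sp1 by simp
  have spg: "V.span (g ` B2) = g ` C2" using G.span_image sp2 by simp
  have int0: "V.span (f ` B1) \<inter> V.span (g ` B2) = {0}"
  proof
    show "{0} \<subseteq> V.span (f ` B1) \<inter> V.span (g ` B2)" using V.span_zero by auto
    show "V.span (f ` B1) \<inter> V.span (g ` B2) \<subseteq> {0}"
    proof
      fix z assume "z \<in> V.span (f ` B1) \<inter> V.span (g ` B2)"
      then have zz: "z \<in> f ` C1" "z \<in> g ` C2" using spf spg by auto
      then obtain u where "z = f u" by blast
      moreover obtain v where "z = g v" using zz by blast
      ultimately have uv: "z = f u" "z = g v" by auto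
      have "v i = 0" if "i < n" for i
      proof -
        have fg: "f u = g v" using uv by simp
        have "u i + 0 = 0 + v i" using fun_cong[OF fg, of i] that
          unfolding f_def g_def uv_concat_def by simp
        moreover have "u i - 0 = 0 - v i" using fun_cong[OF fg, of "i+n"] that
          unfolding f_def g_def uv_concat_def by simp
        ultimately have "v i + v i = 0" by simp
        then have "2 * v i = 0" by (metis mult_2)
        then show ?thesis using two by simp
      qed
      then have "g v = 0" by (auto simp: fun_eq_iff g_def uv_concat_def)
      then show "z \<in> {0}" using uv by simp
    qed
  qed
  have IU: "V.independent (f ` B1 \<union> g ` B2)"
    by (rule V.independent_Un_span_disj[OF I1 I2 _ int0]) (use fin2 in simp)
  have disj: "f ` B1 \<inter> g ` B2 = {}"
  proof (rule ccontr)
    assume "f ` B1 \<inter> g ` B2 \<noteq> {}"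
    then obtain z where "z \<in> f ` B1" "z \<in> g ` B2" by blast
    then have "z \<in> V.span (f ` B1) \<inter> V.span (g ` B2)"
      using V.span_base[of z "f ` B1"] V.span_base[of z "g ` B2"] by simp
    then have "z = 0" using int0 by blast
    then have "0 \<in> f ` B1" using \<open>z \<in> f ` B1\<close> by simp
    then show False using I1 V.dependent_zero[of "f ` B1"] by simp
  qed
  have cU: "card (f ` B1 \<union> g ` B2) = 2*n - 2"
    using card_Un_disjoint[OF _ _ disj] fin1 fin2 c1 c2 n3 by simp
  have CCeq: "{uv_concat n u v | u v. u \<in> C1 \<and> v \<in> C2} = V.span (f ` B1 \<union> g ` B2)"
  proof -
    have e: "uv_concat n u v = f u + g v" for u v
      by (auto simp: fun_eq_iff f_def g_def uv_concat_def)
    show ?thesis unfolding V.span_Un spf spg by (auto simp: e)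
  qed
  show ?thesis
    unfolding linear_code_def
  proof (intro conjI)
    show "V.subspace {uv_concat n u v | u v. u \<in> C1 \<and> v \<in> C2}" unfolding CCeq by simp
    show "\<forall>x\<in>{uv_concat n u v | u v. u \<in> C1 \<and> v \<in> C2}. \<forall>i\<ge>2 * n. x i = 0"
      by (auto simp: uv_concat_def)
    show "V.dim {uv_concat n u v | u v. u \<in> C1 \<and> v \<in> C2} = 2 * n - 2"
      unfolding CCeq V.dim_span V.dim_eq_card_independent[OF IU] cU ..
  qed
qed



lemma double_zero: "(2::'a::field) \<noteq> 0 \<Longrightarrow> (a::'a) + a = 0 \<Longrightarrow> a = 0"
  by (metis mult_2 mult_eq_0_iff)

theorem mainTheorem13:
  fixes C1 C2 :: "(nat \<Rightarrow> 'a::{field,finite}) set"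
    and n b :: nat and x :: "nat \<Rightarrow> 'a" and H :: "nat set"
  assumes "odd (card (UNIV :: 'a set))"
    and "n \<ge> 3" and "1 \<le> b" and "b \<le> n - 2"
    and "linear_code n (n - 1) C1" and "linear_code n (n - 1) C2"
    and "b_MDS n (n - 1) b C1" and "b_MDS n (n - 1) b C2"
    and "x \<in> C1 \<inter> C2"
    and "H \<in> holes n (chi n 1 x)"
    and "wb n b x = db n b C1"
    and "card H \<ge> b - 1"
    and "{0, n - 1} \<inter> H \<noteq> {}"
  shows "linear_code (2 * n) (2 * n - 2) {uv_concat n u v | u v. u \<in> C1 \<and> v \<in> C2}
         \<and> b_AMDS (2 * n) (2 * n - 2) b {uv_concat n u v | u v. u \<in> C1 \<and> v \<in> C2}
         \<and> db (2 * n) b {uv_concat n u v | u v. u \<in> C1 \<and> v \<in> C2} = b + 1"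
proof -
  note odd = assms(1) and n3 = assms(2) and b1 = assms(3) and bn = assms(4)
    and L1 = assms(5) and L2 = assms(6) and M1 = assms(7) and xC = assms(9)
    and hH = assms(10) and wx = assms(11) and cH = assms(12) and H0 = assms(13)
  define CC where "CC = {uv_concat n u v | u v. u \<in> C1 \<and> v \<in> C2}"
  have two: "(2::'a) \<noteq> 0" using two_ne_zero_field[OF odd] .
  have z1: "\<forall>x\<in>C1. \<forall>i\<ge>n. x i = 0" using L1 by (simp add: linear_code_def)
  have db1: "db n b C1 = b + 1" using M1 n3 bn by (simp add: b_MDS_def)
  have low1: "b + 1 \<le> wb n b u" if "u \<in> C1" "u \<noteq> 0" for u
  proof -
    have "db n b C1 \<le> wb n b u" unfolding db_def
      by (rule cInf_lower) (use that in auto)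
    then show ?thesis using db1 by simp
  qed
  have bn': "b \<le> n" using bn by linarith
  have low: "b + 1 \<le> wb (2*n) b c" if cC: "c \<in> CC" and c0: "c \<noteq> 0" for c
  proof -
    obtain u v where uv: "c = uv_concat n u v" "u \<in> C1" "v \<in> C2" using cC by (auto simp: CC_def)
    have cz: "c i = 0" if "i \<ge> 2*n" for i using that by (simp add: uv uv_concat_def)
    obtain p where p: "c p \<noteq> 0" using c0 by (auto simp: fun_eq_iff)
    have p2: "p < 2*n" using cz p by (meson not_le)
    show ?thesis
    proof (cases "\<exists>p'. p' < 2*n \<and> p' \<noteq> p \<and> c p' \<noteq> 0")
      case True
      then obtain p' where p': "p' < 2*n" "p' \<noteq> p" "c p' \<noteq> 0" by blast
      show ?thesis unfolding wb_def
        by (rule two_support_card[OF p2 p'(1) p'(2)[symmetric] p p'(3) b1]) (use bn in linarith)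
    next
      case False
      then have only: "c i = 0" if "i < 2*n" "i \<noteq> p" for i using that by blast
      have cl: "c i = u i + v i" if "i < n" for i using that by (simp add: uv uv_concat_def)
      have ch: "c (i + n) = u i - v i" if "i < n" for i using that by (simp add: uv uv_concat_def)
      obtain w k where w: "w \<in> C1" "k < n" "w k \<noteq> 0" "\<And>i. i < n \<Longrightarrow> i \<noteq> k \<Longrightarrow> w i = 0"
      proof (cases "p < n")
        case True
        have e: "u i = v i" if "i < n" for i
          using only[of "i+n"] ch[of i] that True by simp
        show ?thesis
        proof (rule that[OF uv(2) True])
          show "u p \<noteq> 0" using p cl[OF True] e[OF True] by auto
          show "u i = 0" if "i < n" "i \<noteq> p" for i
            using only[of i] cl[of i] e[of i] that double_zero[OF two, of "u i"] by simp
        qed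
      next
        case False
        define q where "q = p - n"
        have q: "q < n" "p = q + n" using False p2 unfolding q_def by auto
        have e: "v i = - u i" if "i < n" for i
          using only[of i] cl[of i] that q by (simp add: eq_neg_iff_add_eq_0 add.commute)
        show ?thesis
        proof (rule that[OF uv(2) q(1)])
          show "u q \<noteq> 0" using p ch[OF q(1)] e[OF q(1)] q by auto
          show "u i = 0" if "i < n" "i \<noteq> q" for i
            using only[of "i+n"] ch[of i] e[of i] that q double_zero[OF two, of "u i"] by simp
        qed
      qed
      have "w \<noteq> 0" using w(3) by auto
      then have "b + 1 \<le> wb n b w" using low1 w(1) by simp
      moreover have "card (chi n b w) \<le> b"
        by (rule single_support_card[OF w(2) w(4) bn'])
      ultimately show ?thesis unfolding wb_def by simp
    qed
  qed
  define y where "y = uv_concat n x x"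
  have yC: "y \<in> CC" using xC by (auto simp: CC_def y_def)
  have wxb: "card (chi n b x) = b + 1" using wx db1 by (simp add: wb_def)
  have y0: "y \<noteq> 0"
  proof
    assume "y = 0"
    have "chi n b x \<noteq> {}" using wxb by auto
    then obtain i j where ij: "i < n" "j < b" "x ((i + j) mod n) \<noteq> 0" by (auto simp: chi_def)
    define k where "k = (i + j) mod n"
    have "k < n" using n3 by (simp add: k_def)
    then have "y k = x k + x k" by (simp add: y_def uv_concat_def)
    then have "x k + x k = 0" using \<open>y = 0\<close> by simp
    then show False using double_zero[OF two] ij(3) by (simp add: k_def)
  qed
  have up: "wb (2*n) b y \<le> b + 1"
    using upper[OF hH cH H0 n3 b1 bn] wxb by (simp add: wb_def y_def)
  have wy: "wb (2*n) b y = b + 1" using up low[OF yC y0] by simp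
  have dbC: "db (2*n) b CC = b + 1"
    unfolding db_def
  proof (rule cInf_eq_minimum)
    show "b + 1 \<in> {wb (2 * n) b c |c. c \<in> CC \<and> c \<noteq> 0}" using yC y0 wy by (metis (mono_tags, lifting) mem_Collect_eq)
  qed (use low in auto)
  have lc: "linear_code (2 * n) (2 * n - 2) CC"
    unfolding CC_def by (rule dim_part[OF two n3 L1 L2])
  have am: "b_AMDS (2 * n) (2 * n - 2) b CC"
    unfolding b_AMDS_def dbC using n3 bn by simp
  show ?thesis using lc am dbC unfolding CC_def by simp
qed


end
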